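(* Let $\gamma_*>0$ and let $\Phi$ denote the standard normal CDF. Define \[ t_+=\tfrac32\gamma_*+\tfrac{1}{\gamma_*}\log\left(1-\sqrt{1-e^{-\gamma_*}}\right),\qquad t_-=\tfrac32\gamma_*+\tfrac{1}{\gamma_*}\log\left(1+\sqrt{1-e^{-\gamma_*}}\right), \] and for $x\ne2\gamma_*$ \[ h(x)=\frac{\Phi(t_--x)-\Phi(t_--2\gamma_* )}{\Phi(t_+-x)-\Phi(t_+-2\gamma_* )}. \] Let $k=e^{-\frac12(t_--2\gamma_* )^2+\frac12(t_+-2\gamma_* )^2}$ and $c=\frac{k}{1+k}$. Then $\lim_{x\to2\gamma_*}h(x)=k$, $c\in(0,1)$, and \[ h(x)\le\frac{c}{1-c}\ \text{ if } x<2\gamma_*,\qquad h(x)\ge\frac{c}{1-c}\ \text{ if } x>2\gamma_*. \] *)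

theory Defs
  imports "HOL-Probability.Probability"
begin

definition Phi :: "real \<Rightarrow> real" where
  "Phi x = cdf (density lborel std_normal_density) x"

definition t_plus :: "real \<Rightarrow> real" where
  "t_plus g = 3/2 * g + (1/g) * ln (1 - sqrt (1 - exp (-g)))"

definition t_minus :: "real \<Rightarrow> real" where
  "t_minus g = 3/2 * g + (1/g) * ln (1 + sqrt (1 - exp (-g)))"

definition h_fun :: "real \<Rightarrow> real \<Rightarrow> real" where
  "h_fun g x = (Phi (t_minus g - x) - Phi (t_minus g - 2*g)) /
               (Phi (t_plus g - x) - Phi (t_plus g - 2*g))"

definition k_const :: "real \<Rightarrow> real" where
  "k_const g = exp (- (1/2) * (t_minus g - 2*g)^2 + (1/2) * (t_plus g - 2*g)^2)"

definition c_const :: "real \<Rightarrow> real" where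
  "c_const g = k_const g / (1 + k_const g)"

end

theory Submission imports Defs begin

lemma Phi_diff:
  assumes "x < y"
  shows "Phi y - Phi x = integral {x<..y} std_normal_density"
proof -
  interpret real_distribution "density lborel std_normal_density"
    using real_dist_normal_dist .
  have "Phi y - Phi x = measure (density lborel std_normal_density) {x<..y}"
    unfolding Phi_def using cdf_diff_eq[OF assms] .
  also have "\<dots> = integral\<^sup>L (density lborel std_normal_density) (indicator {x<..y})"
    by (simp add: emeasure_eq_measure)
  also have "\<dots> = integral\<^sup>L lborel (\<lambda>t. std_normal_density t *\<^sub>R indicator {x<..y} t)"
    by (rule integral_density) auto
  also have "\<dots> = (LINT t:{x<..y}|lborel. std_normal_density t)"
    unfolding set_lebesgue_integral_def by (simp add: mult.commute)
  also have "\<dots> = integral {x<..y} std_normal_density"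
  proof (rule set_borel_integral_eq_integral)
    show "set_integrable lborel {x<..y} std_normal_density"
      unfolding set_integrable_def
      by (rule integrable_mult_indicator) auto
  qed
  finally show ?thesis .
qed

lemma Phi_diff':
  assumes "x \<le> y"
  shows "Phi y = Phi x + integral {x..y} std_normal_density"
proof (cases "x = y")
  case True then show ?thesis by simp
next
  case False
  then have "x < y" using assms by simp
  have "integral {x<..y} std_normal_density = integral {x..y} std_normal_density"
    by (rule integral_spike_set) (auto intro: negligible_subset[of "{x}"])
  then show ?thesis using Phi_diff[OF \<open>x < y\<close>] by simp
qed

lemma cont_phi: "continuous_on S std_normal_density"
  unfolding std_normal_density_def by (intro continuous_intros) auto

lemma Phi_deriv: "(Phi has_real_derivative std_normal_density x) (at x)"
proof -
  define a where "a = x - 1"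
  define b where "b = x + 1"
  have "((\<lambda>u. integral {a..u} std_normal_density) has_real_derivative std_normal_density x) (at x within {a..b})"
    by (rule integral_has_real_derivative) (auto simp: cont_phi a_def b_def)
  then have "((\<lambda>u. integral {a..u} std_normal_density) has_real_derivative std_normal_density x) (at x)"
    using at_within_Icc_at[of a x b] by (simp add: a_def b_def)
  then have "((\<lambda>u. Phi a + integral {a..u} std_normal_density) has_real_derivative std_normal_density x) (at x)"
    by (auto intro!: derivative_eq_intros)
  then show ?thesis
    by (rule has_field_derivative_transform_within_open[where S="{a<..<b}"])
       (auto simp: a_def b_def intro!: Phi_diff'[symmetric])
qed

lemma dens_id:
  "std_normal_density (a + u) = exp (- (a^2)/2 + b^2/2) * exp (u * (b - a)) * std_normal_density (b + u)"
proof -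
  have "exp (- ((a+u)^2)/2) = exp (- (a^2)/2 + b^2/2) * exp (u * (b - a)) * exp (- ((b+u)^2)/2)"
  proof -
    have eq: "- ((a+u)^2)/2 = (- (a^2)/2 + b^2/2) + u * (b - a) + (- ((b+u)^2)/2)"
      by (simp add: power2_eq_square field_simps)
    show ?thesis unfolding eq exp_add by simp
  qed
  then show ?thesis unfolding std_normal_density_def by simp
qed

lemma Phi_strict: "x < y \<Longrightarrow> Phi x < Phi y"
  by (rule DERIV_pos_imp_increasing) (auto intro!: Phi_deriv normal_density_pos)

lemma key_ineq:
  fixes a b u :: real
  assumes "b < a"
  shows "Phi (a+u) - Phi a \<le> exp (- (a^2)/2 + b^2/2) * (Phi (b+u) - Phi b)"
proof -
  define k where "k = exp (- (a^2)/2 + b^2/2)"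
  define F where "F u = Phi (a+u) - k * Phi (b+u)" for u
  have D: "(F has_real_derivative (std_normal_density (a+v) - k * std_normal_density (b+v))) (at v)" for v
    unfolding F_def
    by (auto intro!: derivative_eq_intros DERIV_chain2[OF Phi_deriv])
  have E: "std_normal_density (a+v) - k * std_normal_density (b+v)
      = k * std_normal_density (b+v) * (exp (v * (b - a)) - 1)" for v
    unfolding dens_id[of a v b] k_def by (simp add: algebra_simps)
  have "F u \<le> F 0"
  proof (cases "u \<ge> 0")
    case True
    show ?thesis
    proof (rule DERIV_nonpos_imp_nonincreasing[of 0 u F, OF True])
      fix v assume v: "0 \<le> v" "v \<le> u"
      have "exp (v * (b - a)) \<le> 1" using v assms by (simp add: mult_nonneg_nonpos)
      moreover have "0 \<le> k * std_normal_density (b+v)" by (simp add: k_def)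
      ultimately have "std_normal_density (a+v) - k * std_normal_density (b+v) \<le> 0"
        unfolding E by (auto intro!: mult_nonneg_nonpos)
      then show "\<exists>y. (F has_real_derivative y) (at v) \<and> y \<le> 0"
        using D[of v] by blast
    qed
  next
    case False
    show ?thesis
    proof (rule DERIV_nonneg_imp_nondecreasing[of u 0 F])
      show "u \<le> 0" using False by simp
      fix v assume v: "u \<le> v" "v \<le> 0"
      have "exp (v * (b - a)) \<ge> 1" using v assms by (simp add: mult_nonpos_nonpos)
      moreover have "0 \<le> k * std_normal_density (b+v)" by (simp add: k_def)
      ultimately have "std_normal_density (a+v) - k * std_normal_density (b+v) \<ge> 0"
        unfolding E by auto
      then show "\<exists>y. (F has_real_derivative y) (at v) \<and> y \<ge> 0"
        using D[of v] by blast
    qed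
  qed
  then show ?thesis unfolding F_def k_def by (simp add: algebra_simps)
qed

theorem lemma7:
  fixes \<gamma> :: real
  assumes "\<gamma> > 0"
  shows "(h_fun \<gamma> \<longlongrightarrow> k_const \<gamma>) (at (2*\<gamma>))
         \<and> 0 < c_const \<gamma> \<and> c_const \<gamma> < 1
         \<and> (\<forall>x. x < 2*\<gamma> \<longrightarrow> h_fun \<gamma> x \<le> c_const \<gamma> / (1 - c_const \<gamma>))
         \<and> (\<forall>x. x > 2*\<gamma> \<longrightarrow> h_fun \<gamma> x \<ge> c_const \<gamma> / (1 - c_const \<gamma>))"
proof -
  define g where "g = \<gamma>"
  have g: "g > 0" using assms by (simp add: g_def)
  define s where "s = sqrt (1 - exp (-g))"
  have e1: "exp (-g) < 1" using g by simp
  have e0: "exp (-g) > 0" by simp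
  have s0: "s > 0" unfolding s_def using e1 by simp
  have s1: "s < 1" unfolding s_def using e0 e1 by (simp add: real_sqrt_less_iff)
  define a where "a = t_minus g - 2*g"
  define b where "b = t_plus g - 2*g"
  have "ln (1 - s) < ln (1 + s)" using s0 s1 by simp
  then have "(1/g) * ln (1 - s) < (1/g) * ln (1 + s)" using g by (simp add: divide_strict_right_mono)
  then have ba: "b < a" unfolding a_def b_def t_minus_def t_plus_def s_def by simp
  define k where "k = k_const g"
  have kdef: "k = exp (- (a^2)/2 + b^2/2)"
    unfolding k_def k_const_def a_def b_def by simp
  have k0: "k > 0" unfolding kdef by simp
  have ck: "c_const g / (1 - c_const g) = k"
    unfolding c_const_def k_def[symmetric] using k0 by (simp add: field_simps)
  have c0: "0 < c_const g" "c_const g < 1"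
    unfolding c_const_def k_def[symmetric] using k0 by (simp_all add: field_simps)
  have hu: "h_fun g x = (Phi (a + (2*g - x)) - Phi a) / (Phi (b + (2*g - x)) - Phi b)" for x
    unfolding h_fun_def a_def b_def by simp
  have le: "\<forall>x. x < 2*g \<longrightarrow> h_fun g x \<le> k"
  proof (intro allI impI)
    fix x assume x: "x < 2*g"
    define u where "u = 2*g - x"
    have u: "u > 0" using x by (simp add: u_def)
    have D: "Phi (b + u) - Phi b > 0" using Phi_strict[of b "b+u"] u by simp
    have "Phi (a+u) - Phi a \<le> k * (Phi (b+u) - Phi b)"
      unfolding kdef by (rule key_ineq[OF ba])
    then show "h_fun g x \<le> k" unfolding hu u_def[symmetric] using D
      by (simp add: pos_divide_le_eq)
  qed
  have ge: "\<forall>x. x > 2*g \<longrightarrow> h_fun g x \<ge> k"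
  proof (intro allI impI)
    fix x assume x: "x > 2*g"
    define u where "u = 2*g - x"
    have u: "u < 0" using x by (simp add: u_def)
    have D: "Phi (b + u) - Phi b < 0" using Phi_strict[of "b+u" b] u by simp
    have "Phi (a+u) - Phi a \<le> k * (Phi (b+u) - Phi b)"
      unfolding kdef by (rule key_ineq[OF ba])
    then show "h_fun g x \<ge> k" unfolding hu u_def[symmetric] using D
      by (simp add: neg_le_divide_eq mult.commute)
  qed
  have lim: "(h_fun g \<longlongrightarrow> k) (at (2*g))"
  proof -
    have Da: "((\<lambda>h. Phi (a - h)) has_real_derivative - std_normal_density a) (at 0)"
    proof -
      have "((\<lambda>h. a - h) has_real_derivative -1) (at 0)" by (auto intro!: derivative_eq_intros)
      from DERIV_chain2[OF Phi_deriv this] show ?thesis by simp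
    qed
    have Db: "((\<lambda>h. Phi (b - h)) has_real_derivative - std_normal_density b) (at 0)"
    proof -
      have "((\<lambda>h. b - h) has_real_derivative -1) (at 0)" by (auto intro!: derivative_eq_intros)
      from DERIV_chain2[OF Phi_deriv this] show ?thesis by simp
    qed
    have La: "((\<lambda>h. (Phi (a - h) - Phi a) / h) \<longlongrightarrow> - std_normal_density a) (at 0)"
      using Da unfolding DERIV_def by simp
    have Lb: "((\<lambda>h. (Phi (b - h) - Phi b) / h) \<longlongrightarrow> - std_normal_density b) (at 0)"
      using Db unfolding DERIV_def by simp
    have nz: "- std_normal_density b \<noteq> 0" using normal_density_pos[of 1 0 b] by simp
    have L: "((\<lambda>h. ((Phi (a - h) - Phi a) / h) / ((Phi (b - h) - Phi b) / h)) \<longlongrightarrow>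
              (- std_normal_density a) / (- std_normal_density b)) (at 0)"
      by (rule tendsto_divide[OF La Lb nz])
    have kk: "(- std_normal_density a) / (- std_normal_density b) = k"
      using dens_id[of a 0 b] nz unfolding kdef by simp
    have ev: "eventually (\<lambda>h. ((Phi (a - h) - Phi a) / h) / ((Phi (b - h) - Phi b) / h)
                = h_fun g (2*g + h)) (at 0)"
      unfolding eventually_at_filter hu by (auto intro!: always_eventually)
    have "((\<lambda>h. h_fun g (2*g + h)) \<longlongrightarrow> k) (at 0)"
      using tendsto_cong[OF ev] L kk by simp
    then show ?thesis by (subst LIM_offset_zero_iff) auto
  qed
  show ?thesis using lim c0 le ge ck unfolding g_def k_def by simp
qed

end
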